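(* Let $g:\{0,1,2,3\}^*\to\{0,1,2,3\}^*$ be the morphism $g(0)=01$, $g(1)=20$, $g(2)=23$, $g(3)=02$, and $\tau$ the coding $\tau(0)=2$, $\tau(1)=1$, $\tau(2)=0$, $\tau(3)=1$; let $\mathbf{vtm}=\tau(g^\omega(0))$, an infinite word over $\{0,1,2\}$. Let $\Delta$ be a finite alphabet and $h:\{0,1,2\}^*\to\Delta^*$ a morphism such that $h(0),h(1),h(2)$ are not all empty. If the three lengths $|h(0)|,|h(1)|,|h(2)|$ form an arithmetic progression, then the infinite word $h(\mathbf{vtm})$ is $2$-automatic.
   Context: $g^\omega(0)$ denotes the infinite fixed point of $g$ starting with $0$. An infinite word $(a_n)_{n\ge0}$ is $2$-automatic if there is a deterministic finite automaton with output that, on input the base-$2$ representation of $n$ (most significant digit first), outputs $a_n$; equivalently, it is the image under a coding of a fixed point of a $2$-uniform morphism. *)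

theory Defs
  imports Main
begin

definition gsym :: "nat \<Rightarrow> nat list" where
  "gsym a = (if a = 0 then [0,1] else if a = 1 then [2,0] else if a = 2 then [2,3] else [0,2])"

definition gmor :: "nat list \<Rightarrow> nat list" where
  "gmor xs = concat (map gsym xs)"

text \<open>The infinite fixed point g^omega(0): the limit of the words g^k(0); since
  g^k(0) has length 2^k and is a prefix of g^(k+1)(0), the n-th letter is
  the n-th letter of g^(n+1)(0).\<close>
definition gomega :: "nat \<Rightarrow> nat" where
  "gomega n = ((gmor ^^ Suc n) [0]) ! n"

definition tau :: "nat \<Rightarrow> nat" where
  "tau a = (if a = 0 then 2 else if a = 1 then 1 else if a = 2 then 0 else 1)"

definition vtm :: "nat \<Rightarrow> nat" where
  "vtm n = tau (gomega n)"

definition morph_prefix :: "(nat \<Rightarrow> 'd list) \<Rightarrow> (nat \<Rightarrow> nat) \<Rightarrow> nat \<Rightarrow> 'd list" where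
  "morph_prefix h w k = concat (map (\<lambda>i. h (w i)) [0..<k])"

definition morph_image :: "(nat \<Rightarrow> 'd list) \<Rightarrow> (nat \<Rightarrow> nat) \<Rightarrow> nat \<Rightarrow> 'd" where
  "morph_image h w n =
     morph_prefix h w (LEAST k. n < length (morph_prefix h w k)) ! n"

text \<open>Base-2 representation, most significant digit first, no leading zeros
  (0 is represented by the empty word).\<close>
fun bin_msd :: "nat \<Rightarrow> nat list" where
  "bin_msd n = (if n = 0 then [] else bin_msd (n div 2) @ [n mod 2])"

definition two_automatic :: "(nat \<Rightarrow> 'd) \<Rightarrow> bool" where
  "two_automatic a \<longleftrightarrow>
     (\<exists>(Q :: nat set) q0 (\<delta> :: nat \<Rightarrow> nat \<Rightarrow> nat) (out :: nat \<Rightarrow> 'd).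
        finite Q \<and> q0 \<in> Q \<and> (\<forall>q\<in>Q. \<forall>d\<in>{0,1}. \<delta> q d \<in> Q) \<and>
        (\<forall>n. out (foldl \<delta> q0 (bin_msd n)) = a n))"

end

theory Submission imports Defs begin

fun U :: "nat \<Rightarrow> nat" where
  "U n = (if n = 0 then 0 else gsym (U (n div 2)) ! (n mod 2))"
declare U.simps[simp del]

lemma U0[simp]: "U 0 = 0" by (subst U.simps) simp

lemma gsym_len[simp]: "length (gsym a) = 2" by (simp add: gsym_def)

lemma gsym_le3: "i < 2 \<Longrightarrow> gsym a ! i \<le> 3"
  by (auto simp: gsym_def nth_Cons split: nat.splits)

lemma U_rec: "d < 2 \<Longrightarrow> U (2*n+d) = gsym (U n) ! d"
proof (cases "2*n+d = 0")
  case True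
  then show ?thesis by (simp add: gsym_def)
next
  case False
  assume "d < 2"
  then show ?thesis using False by (subst U.simps) (simp add: gsym_def)
qed

lemma U_le3: "U n \<le> 3"
  by (subst U.simps) (auto intro: gsym_le3)

lemma gmor_Cons: "gmor (x#xs) = gsym x @ gmor xs" by (simp add: gmor_def)

lemma length_gmor: "length (gmor xs) = 2 * length xs"
  by (induction xs) (auto simp: gmor_Cons, simp add: gmor_def)

lemma gmor_nth: "i < 2 * length xs \<Longrightarrow> gmor xs ! i = gsym (xs ! (i div 2)) ! (i mod 2)"
proof (induction xs arbitrary: i)
  case Nil then show ?case by simp
next
  case (Cons x xs)
  show ?case
  proof (cases "i < 2")
    case True
    then show ?thesis by (auto simp: gmor_Cons nth_append)
  next
    case False
    then have "i - 2 < 2 * length xs" using Cons.prems by simp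
    then have "gmor xs ! (i-2) = gsym (xs ! ((i-2) div 2)) ! ((i-2) mod 2)" using Cons.IH by blast
    moreover have "(i-2) div 2 = i div 2 - 1" using False by auto
    moreover have "(i-2) mod 2 = i mod 2" using False by presburger
    moreover have "(x#xs) ! (i div 2) = xs ! (i div 2 - 1)"
    proof -
      have "i div 2 = Suc (i div 2 - 1)" using False by auto
      then show ?thesis by (metis nth_Cons_Suc)
    qed
    ultimately show ?thesis using False by (simp add: gmor_Cons nth_append)
  qed
qed

lemma len_pow: "length ((gmor^^k) [0]) = 2^k"
  by (induction k) (auto simp: length_gmor)

lemma pow_nth: "i < 2^k \<Longrightarrow> (gmor^^k) [0] ! i = U i"
proof (induction k arbitrary: i)
  case 0 then show ?case by simp
next
  case (Suc k)
  have "(gmor^^Suc k) [0] ! i = gsym ((gmor^^k) [0] ! (i div 2)) ! (i mod 2)"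
    using Suc.prems by (simp add: gmor_nth len_pow)
  also have "\<dots> = gsym (U (i div 2)) ! (i mod 2)" using Suc by simp
  also have "\<dots> = U (2 * (i div 2) + i mod 2)" by (rule U_rec[symmetric]) simp
  also have "2 * (i div 2) + i mod 2 = i" by simp
  finally show ?case .
qed

lemma gomega_U: "gomega n = U n"
proof -
  have "n < 2 ^ n" by (rule less_exp)
  moreover have "(2::nat) ^ n \<le> 2 ^ Suc n" by simp
  ultimately have "n < 2 ^ Suc n" by linarith
  then show ?thesis unfolding gomega_def by (rule pow_nth)
qed

lemma U_pair: "(U n \<le> 1 \<and> U (Suc n) \<in> {1,2}) \<or> (U n \<in> {2,3} \<and> U (Suc n) \<in> {0,3})"
proof (induction n rule: less_induct)
  case (less n)
  obtain k where k: "n = 2*k \<or> n = 2*k+1" by (metis odd_two_times_div_two_succ even_two_times_div_two)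
  then show ?case
  proof
    assume n: "n = 2*k"
    have a: "U n = gsym (U k) ! 0" using U_rec[of 0 k] n by simp
    have b: "U (Suc n) = gsym (U k) ! 1" using U_rec[of 1 k] n by simp
    have "U k \<le> 3" by (rule U_le3)
    then have "U k = 0 \<or> U k = 1 \<or> U k = 2 \<or> U k = 3" by auto
    then show ?thesis using a b by (auto simp: gsym_def)
  next
    assume n: "n = 2*k+1"
    have a: "U n = gsym (U k) ! 1" using U_rec[of 1 k] n by simp
    have b: "U (Suc n) = gsym (U (Suc k)) ! 0" using U_rec[of 0 "Suc k"] n by simp
    have "k < n" using n by simp
    then have ih: "(U k \<le> 1 \<and> U (Suc k) \<in> {1,2}) \<or> (U k \<in> {2,3} \<and> U (Suc k) \<in> {0,3})" using less by blast
    have "U k \<le> 3" by (rule U_le3)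
    then have "U k = 0 \<or> U k = 1 \<or> U k = 2 \<or> U k = 3" by auto
    then show ?thesis using a b ih by (auto simp: gsym_def)
  qed
qed


lemma automatic_from_rec:
  fixes st :: "nat \<Rightarrow> 's" and Q :: "'s set" and dl :: "'s \<Rightarrow> nat \<Rightarrow> 's" and out :: "'s \<Rightarrow> 'd"
  assumes fin: "finite Q" and stQ: "\<And>n. st n \<in> Q"
    and clos: "\<And>q d. q \<in> Q \<Longrightarrow> d < 2 \<Longrightarrow> dl q d \<in> Q"
    and rec: "\<And>n d. d < 2 \<Longrightarrow> st (2*n+d) = dl (st n) d"
    and outp: "\<And>n. out (st n) = a n"
  shows "two_automatic a"
proof -
  obtain f :: "'s \<Rightarrow> nat" and N where fN: "f ` Q = {i. i < N}" and inj: "inj_on f Q"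
    using finite_imp_inj_to_nat_seg[OF fin] by blast
  define g where "g = inv_into Q f"
  have gf: "q \<in> Q \<Longrightarrow> g (f q) = q" for q unfolding g_def using inj by simp
  define Q' where "Q' = f ` Q"
  define d' where "d' q d = f (dl (g q) d)" for q d
  define o' where "o' q = out (g q)" for q
  have fold: "foldl d' (f (st 0)) (bin_msd n) = f (st n)" for n
  proof (induction n rule: bin_msd.induct)
    case (1 n)
    show ?case
    proof (cases "n = 0")
      case True then show ?thesis by simp
    next
      case False
      then have "foldl d' (f (st 0)) (bin_msd n) = d' (f (st (n div 2))) (n mod 2)"
        using 1 by (subst bin_msd.simps) simp
      also have "\<dots> = f (dl (st (n div 2)) (n mod 2))" unfolding d'_def using gf stQ by simp
      also have "\<dots> = f (st (2 * (n div 2) + n mod 2))" using rec[of "n mod 2" "n div 2"] by simp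
      finally show ?thesis by simp
    qed
  qed
  show ?thesis unfolding two_automatic_def
  proof (intro exI conjI ballI allI)
    show "finite Q'" unfolding Q'_def using fin by simp
    show "f (st 0) \<in> Q'" unfolding Q'_def using stQ by simp
    show "d' q d \<in> Q'" if "q \<in> Q'" "d \<in> {0,1}" for q d
    proof -
      obtain q0 where "q0 \<in> Q" "q = f q0" using \<open>q \<in> Q'\<close> unfolding Q'_def by blast
      then show ?thesis unfolding d'_def Q'_def using gf clos that(2) by auto
    qed
    show "o' (foldl d' (f (st 0)) (bin_msd n)) = a n" for n
      unfolding fold o'_def using gf stQ outp by simp
  qed
qed

lemma morph_prefix_Suc: "morph_prefix h w (Suc k) = morph_prefix h w k @ h (w k)"
  by (simp add: morph_prefix_def)

lemma morph_image_at:
  assumes "length (morph_prefix h w k) \<le> m" "m < length (morph_prefix h w (Suc k))"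
  shows "morph_image h w m = h (w k) ! (m - length (morph_prefix h w k))"
proof -
  have mono: "length (morph_prefix h w j) \<le> length (morph_prefix h w j')" if "j \<le> j'" for j j'
    by (rule lift_Suc_mono_le[of "\<lambda>j. length (morph_prefix h w j)", OF _ that]) (simp add: morph_prefix_Suc)
  have "(LEAST j. m < length (morph_prefix h w j)) = Suc k"
  proof (rule Least_equality)
    show "m < length (morph_prefix h w (Suc k))" by fact
    show "Suc k \<le> y" if "m < length (morph_prefix h w y)" for y
    proof (rule ccontr)
      assume "\<not> Suc k \<le> y"
      then have "length (morph_prefix h w y) \<le> length (morph_prefix h w k)" using mono by simp
      then show False using that assms by simp
    qed
  qed
  then show ?thesis unfolding morph_image_def using assms
    by (simp add: morph_prefix_Suc nth_append)
qed


theorem theorem3: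
  fixes \<Delta> :: "'d set" and h :: "nat \<Rightarrow> 'd list"
  assumes "finite \<Delta>"
    and "\<forall>a\<in>{0,1,2::nat}. set (h a) \<subseteq> \<Delta>"
    and "h 0 \<noteq> [] \<or> h 1 \<noteq> [] \<or> h 2 \<noteq> []"
    and "length (h 0) + length (h 2) = 2 * length (h 1)"
  shows "two_automatic (morph_image h vtm)"
proof -
  define L where "L = length (h 1)"
  have Lpos: "L > 0"
  proof (rule ccontr)
    assume "\<not> L > 0"
    then have "length (h 1) = 0" unfolding L_def by simp
    then have "length (h 0) = 0" "length (h 2) = 0" using assms(4) by auto
    then show False using assms(3) \<open>length (h 1) = 0\<close> by simp
  qed
  define D :: int where "D = int (length (h 2)) - int L"
  define len where "len a = length (h (tau a))" for a
  have len0: "int (len 0) = int L + D" unfolding len_def D_def by (simp add: tau_def)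
  have len2: "int (len 2) = int L - D" unfolding len_def D_def L_def using assms(4) by (simp add: tau_def)
  have len1: "len 1 = L" "len 3 = L" unfolding len_def L_def by (simp_all add: tau_def)
  have Dlo: "- int L \<le> D" unfolding D_def by simp
  have Dhi: "D \<le> int L" unfolding D_def L_def using assms(4) by simp
  define s where "s a = (if a = 1 \<or> a = 2 then 1 else 0 :: int)" for a :: nat
  have s01: "s a = 0 \<or> s a = 1" for a unfolding s_def by simp
  have Ds_lo: "- int L \<le> D * s a" for a using s01[of a] Dlo by auto
  have Ds_hi: "D * s a \<le> int L" for a using s01[of a] Dhi by auto
  define P where "P k = length (morph_prefix h vtm k)" for k
  have vtmU: "vtm k = tau (U k)" for k unfolding vtm_def gomega_U ..
  have P_Suc: "P (Suc k) = P k + len (U k)" for k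
    unfolding P_def len_def by (simp add: morph_prefix_Suc vtmU)
  have step: "int (len (U k)) + D * s (U k) = int L + D * s (U (Suc k))" for k
  proof -
    have "U k \<le> 3" by (rule U_le3)
    then have "U k = 0 \<or> U k = 1 \<or> U k = 2 \<or> U k = 3" by auto
    then show ?thesis
    proof (elim disjE)
      assume u: "U k = 0"
      then have "U (Suc k) \<in> {1,2}" using U_pair[of k] by auto
      then show ?thesis using u len0 by (auto simp: s_def)
    next
      assume u: "U k = 1"
      then have "U (Suc k) \<in> {1,2}" using U_pair[of k] by auto
      then show ?thesis using u len1 by (auto simp: s_def)
    next
      assume u: "U k = 2"
      then have "U (Suc k) \<in> {0,3}" using U_pair[of k] by auto
      then show ?thesis using u len2 by (auto simp: s_def)
    next
      assume u: "U k = 3"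
      then have "U (Suc k) \<in> {0,3}" using U_pair[of k] by auto
      then show ?thesis using u len1 by (auto simp: s_def)
    qed
  qed
  have P_form: "int (P k) = int k * int L + D * s (U k)" for k
  proof (induction k)
    case 0
    then show ?case by (simp add: P_def morph_prefix_def s_def)
  next
    case (Suc k)
    have "int (P (Suc k)) = int (P k) + int (len (U k))" by (simp add: P_Suc)
    also have "\<dots> = int k * int L + int L + D * s (U (Suc k))" using Suc step[of k] by simp
    finally show ?case by (simp add: algebra_simps)
  qed
  define st where "st m = (if m div L = 0 then 4 else U (m div L - 1), U (m div L), U (Suc (m div L)), m mod L)" for m
  define Q where "Q = {..(4::nat)} \<times> {..(3::nat)} \<times> {..(3::nat)} \<times> {..<L}"
  define dl where "dl = (\<lambda>(p,c,x,r) e. if 2*r+e < L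
      then (if p = 4 then 4 else gsym p ! 1, gsym c ! 0, gsym c ! 1, 2*r+e)
      else (gsym c ! 0, gsym c ! 1, gsym x ! 0, 2*r+e-L))"
  define out where "out = (\<lambda>(p,c,x,r::nat).
      if int r < D * s c then h (tau p) ! nat (int r - D * s c + int (len p))
      else if int r - D * s c < int (len c) then h (tau c) ! nat (int r - D * s c)
      else h (tau x) ! nat (int r - D * s c - int (len c)))"
  show ?thesis
  proof (rule automatic_from_rec[of Q st dl out])
    show "finite Q" unfolding Q_def by simp
    show "st n \<in> Q" for n unfolding st_def Q_def using U_le3 Lpos le_trans[OF U_le3] by auto
    show "dl q d \<in> Q" if "q \<in> Q" "d < 2" for q d
    proof -
      have g: "gsym a ! 0 \<le> 3" "gsym a ! Suc 0 \<le> 3" for a using gsym_le3[of 0 a] gsym_le3[of 1 a] by simp_all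
      have g4: "gsym a ! 0 \<le> 4" "gsym a ! Suc 0 \<le> 4" for a using g[of a] by simp_all
      show ?thesis using that unfolding Q_def dl_def by (auto simp: g g4)
    qed
    show "st (2*m+e) = dl (st m) e" if e: "e < 2" for m e
    proof -
      define n where "n = m div L"
      define r where "r = m mod L"
      have m: "m = n * L + r" unfolding n_def r_def by simp
      have rL: "r < L" unfolding r_def using Lpos by simp
      have stm: "st m = (if n = 0 then 4 else U (n - 1), U n, U (Suc n), r)"
        unfolding st_def n_def r_def ..
      show ?thesis
      proof (cases "2*r+e < L")
        case True
        have eq: "2*m+e = (2*n) * L + (2*r+e)" using m by (simp add: algebra_simps)
        have dv: "(2*m+e) div L = 2*n" "(2*m+e) mod L = 2*r+e" unfolding eq using True by simp_all
        have u1: "U (2*n) = gsym (U n) ! 0" using U_rec[of 0 n] by simp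
        have u2: "U (Suc (2*n)) = gsym (U n) ! 1" using U_rec[of 1 n] by simp
        have u0: "n \<noteq> 0 \<Longrightarrow> U (2*n - 1) = gsym (U (n-1)) ! 1"
        proof -
          assume "n \<noteq> 0"
          then have "2*n - 1 = 2*(n-1)+1" by simp
          then show ?thesis using U_rec[of 1 "n-1"] by simp
        qed
        have "U (n-1) \<noteq> 4" using U_le3[of "n-1"] by simp
        moreover have "st (2*m+e) = (if 2*n = 0 then 4 else U (2*n - 1), U (2*n), U (Suc (2*n)), 2*r+e)"
          unfolding st_def dv ..
        ultimately show ?thesis unfolding stm dl_def using True u0 u1 u2 by auto
      next
        case False
        have eq: "2*m+e = (2*n+1) * L + (2*r+e-L)" using m False by (simp add: algebra_simps)
        have lt: "2*r+e-L < L" using rL e by simp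
        have dm: "((2*n+1)*L + r') div L = 2*n+1 \<and> ((2*n+1)*L + r') mod L = r'" if "r' < L" for r'
          using that by (metis add.commute div_mult_self1 div_less mod_mult_self1 mod_less Lpos less_not_refl2 add_0)
        have dv: "(2*m+e) div L = 2*n+1" "(2*m+e) mod L = 2*r+e-L" unfolding eq using dm[OF lt] by simp_all
        have u1: "U (2*n) = gsym (U n) ! 0" using U_rec[of 0 n] by simp
        have u2: "U (2*n+1) = gsym (U n) ! 1" using U_rec[of 1 n] by simp
        have u3: "U (Suc (2*n+1)) = gsym (U (Suc n)) ! 0" using U_rec[of 0 "Suc n"] by simp
        have "st (2*m+e) = (if 2*n+1 = 0 then 4 else U (2*n+1 - 1), U (2*n+1), U (Suc (2*n+1)), 2*r+e-L)"
          unfolding st_def dv ..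
        then show ?thesis unfolding stm dl_def using False u1 u2 u3 by simp
      qed
    qed
    show "out (st m) = morph_image h vtm m" for m
    proof -
      define n where "n = m div L"
      define r where "r = m mod L"
      have m: "int m = int n * int L + int r" unfolding n_def r_def
        by (metis div_mult_mod_eq of_nat_add of_nat_mult)
      have rL: "r < L" unfolding r_def using Lpos by simp
      define c where "c = U n"
      define b where "b = D * s c"
      have stm: "st m = (if n = 0 then 4 else U (n - 1), c, U (Suc n), r)"
        unfolding st_def n_def r_def c_def ..
      have Pn: "int (P n) = int n * int L + b" unfolding b_def c_def by (rule P_form)
      have Pn1: "int (P (Suc n)) = int (P n) + int (len c)" unfolding c_def by (simp add: P_Suc)
      have Pn2: "int (P (Suc (Suc n))) \<ge> (int n + 1) * int L"
        using P_form[of "Suc (Suc n)"] Ds_lo[of "U (Suc (Suc n))"] by (simp add: algebra_simps)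
      show ?thesis
      proof (cases "int r < b")
        case True
        have n0: "n \<noteq> 0"
        proof
          assume "n = 0"
          then have "b = 0" unfolding b_def c_def s_def by simp
          then show False using True by simp
        qed
        define k where "k = n - 1"
        have nk: "n = Suc k" unfolding k_def using n0 by simp
        have Pk: "int (P k) = int k * int L + D * s (U k)" by (rule P_form)
        have Pk': "int (P n) = int (P k) + int (len (U k))" unfolding nk by (simp add: P_Suc)
        have A: "P k \<le> m" using Pk Ds_hi[of "U k"] m nk by (simp add: algebra_simps)
        have B: "m < P (Suc k)" using Pn True m nk by simp
        have idx: "m - P k = nat (int r - b + int (len (U k)))" using A Pn Pk' m by simp
        have "morph_image h vtm m = h (tau (U k)) ! (m - P k)"
          using morph_image_at[of h vtm k m] A B unfolding P_def vtmU by simp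
        then show ?thesis unfolding stm out_def using True n0 idx nk b_def by simp
      next
        case False
        note F1 = False
        show ?thesis
        proof (cases "int r - b < int (len c)")
          case True
          have A: "P n \<le> m" using Pn F1 m by simp
          have B: "m < P (Suc n)" using Pn Pn1 True m by simp
          have idx: "m - P n = nat (int r - b)" using A Pn m by simp
          have "morph_image h vtm m = h (tau c) ! (m - P n)"
            using morph_image_at[of h vtm n m] A B unfolding P_def vtmU c_def by simp
          then show ?thesis unfolding stm out_def using True F1 idx b_def by simp
        next
          case False
          have A: "P (Suc n) \<le> m" using Pn Pn1 False m by simp
          have B: "m < P (Suc (Suc n))" using Pn2 m rL by (simp add: algebra_simps)
          have idx: "m - P (Suc n) = nat (int r - b - int (len c))" using A Pn Pn1 m by simp
          have "morph_image h vtm m = h (tau (U (Suc n))) ! (m - P (Suc n))"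
            using morph_image_at[of h vtm "Suc n" m] A B unfolding P_def vtmU by simp
          then show ?thesis unfolding stm out_def using False F1 idx b_def by simp
        qed
      qed
    qed
  qed
qed

end
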